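(* Let $p$ be a prime and $d\ge1$ with $q=p^d>9$ and $q\equiv7\pmod{12}$. Let $H_0$ be the subgroup of order $(q-1)/6$ of ${\rm GF}(q)^\times$ and $G=\{x\mapsto ax+b: a\in H_0,\ b\in{\rm GF}(q)\}$, a nonabelian subgroup of the affine group of ${\rm GF}(q)$ isomorphic to $({\rm GF}(q),+)\rtimes C_{(q-1)/6}$. Then $G$ contains a regular \[\left(\frac{q(q-1)}{6},\ \frac{3(q-3)}{2},\ \frac{q+3}{2},\ 9\right)\text{-PDS}.\]
   Context: A $(v,k,\lambda,\mu)$-PDS in a group $G$ of order $v$ is a $k$-subset $D$ such that every nonidentity element of $D$ is $xy^{-1}$ ($x,y\in D$) in exactly $\lambda$ ways and every nonidentity element of $G\setminus D$ in exactly $\mu$ ways; regular means $D=D^{(-1)}$ and $1\notin D$. *)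

theory Defs
  imports "HOL-Algebra.Group" "HOL-Computational_Algebra.Primes"
begin

definition diff_count :: "('g, 'b) monoid_scheme \<Rightarrow> 'g set \<Rightarrow> 'g \<Rightarrow> nat" where
  "diff_count G D g = card {(x, y). x \<in> D \<and> y \<in> D \<and> x \<otimes>\<^bsub>G\<^esub> inv\<^bsub>G\<^esub> y = g}"

definition is_PDS :: "('g, 'b) monoid_scheme \<Rightarrow> 'g set \<Rightarrow> nat \<Rightarrow> nat \<Rightarrow> nat \<Rightarrow> nat \<Rightarrow> bool" where
  "is_PDS G D v k lam mu \<longleftrightarrow>
     finite (carrier G) \<and> card (carrier G) = v \<and> D \<subseteq> carrier G \<and> card D = k \<and>
     (\<forall>g \<in> carrier G. g \<noteq> \<one>\<^bsub>G\<^esub> \<longrightarrow>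
        diff_count G D g = (if g \<in> D then lam else mu))"

definition is_regular_PDS :: "('g, 'b) monoid_scheme \<Rightarrow> 'g set \<Rightarrow> nat \<Rightarrow> nat \<Rightarrow> nat \<Rightarrow> nat \<Rightarrow> bool" where
  "is_regular_PDS G D v k lam mu \<longleftrightarrow>
     is_PDS G D v k lam mu \<and> (\<lambda>x. inv\<^bsub>G\<^esub> x) ` D = D \<and> \<one>\<^bsub>G\<^esub> \<notin> D"

text \<open>The group of affine maps x \<mapsto> a x + b with a \<in> H0, b \<in> F, encoded as pairs (a,b);
  composition (a,b) \<circ> (c,e) = (x \<mapsto> a(cx+e)+b) = (ac, ae+b).\<close>

definition affine_group :: "'a::field set \<Rightarrow> ('a \<times> 'a) monoid" where
  "affine_group H0 = \<lparr> carrier = H0 \<times> UNIV,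
     monoid.mult = (\<lambda>(a, b) (c, e). (a * c, a * e + b)),
     one = (1, 0) \<rparr>"

end

theory Submission
  imports Defs
begin

lemma even_card_invol:
  assumes "finite S" "\<forall>x\<in>S. f x \<in> S \<and> f x \<noteq> x \<and> f (f x) = x"
  shows "even (card S)"
  using assms
proof (induction "card S" arbitrary: S rule: less_induct)
  case less
  show ?case
  proof (cases "S = {}")
    case True then show ?thesis by simp
  next
    case False
    then obtain x where x: "x \<in> S" by blast
    let ?S = "S - {x, f x}"
    have fx: "f x \<in> S" "f x \<noteq> x" using less.prems x by auto
    have c: "card S = card ?S + 2"
    proof -
      have "card ?S = card S - card {x, f x}"
        by (rule card_Diff_subset) (use less.prems x fx in auto)
      moreover have "card {x, f x} = 2" using fx by simp
      moreover have "card S \<ge> 2" using \<open>card {x, f x} = 2\<close> card_mono[OF less.prems(1), of "{x, f x}"] x fx by auto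
      ultimately show ?thesis by simp
    qed
    have "even (card ?S)"
    proof (rule less.hyps)
      show "card ?S < card S" using c by simp
      show "finite ?S" using less.prems by simp
      show "\<forall>y\<in>?S. f y \<in> ?S \<and> f y \<noteq> y \<and> f (f y) = y"
        using less.prems(2) x by (metis DiffD1 DiffD2 DiffI insertCI insertE singletonD)
    qed
    then show ?thesis using c by simp
  qed
qed

locale pds_ctx =
  fixes H0 :: "'a::{field,finite} set" and m :: nat
  assumes H0z: "0 \<notin> H0" and H0one: "1 \<in> H0"
    and H0mul: "\<And>x y. x \<in> H0 \<Longrightarrow> y \<in> H0 \<Longrightarrow> x * y \<in> H0"
    and cardH0: "card H0 = m" and cardU: "card (UNIV::'a set) = 6 * m + 1" and oddm: "odd m"
begin

lemma two_ne: "(1::'a) + 1 \<noteq> 0"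
proof
  assume h: "(1::'a) + 1 = 0"
  have "even (card (UNIV::'a set))"
  proof (rule even_card_invol[where f = "\<lambda>x. x + 1"])
    show "finite (UNIV::'a set)" by simp
    show "\<forall>x\<in>UNIV. x + 1 \<in> UNIV \<and> x + 1 \<noteq> x \<and> x + 1 + 1 = (x::'a)"
      using h by (simp add: add.assoc)
  qed
  then show False using cardU by simp
qed

lemma neg_ne: "(x::'a) \<noteq> 0 \<Longrightarrow> - x \<noteq> x"
proof
  assume "x \<noteq> 0" "- x = x"
  then have "(1 + 1) * x = 0" by (simp add: distrib_right)
  then show False using two_ne \<open>x \<noteq> 0\<close> by simp
qed

lemma H0nz: "x \<in> H0 \<Longrightarrow> x \<noteq> 0" using H0z by auto

lemma H0inv: assumes "x \<in> H0" shows "inverse x \<in> H0"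
proof -
  have "(\<lambda>y. x * y) ` H0 = H0"
    by (rule endo_inj_surj) (auto simp: H0mul assms inj_on_def H0nz)
  then obtain y where "y \<in> H0" "x * y = 1" using H0one by (metis imageE)
  then show ?thesis using H0nz[OF assms] by (metis inverse_unique)
qed

lemma H0div: "x \<in> H0 \<Longrightarrow> y \<in> H0 \<Longrightarrow> x / y \<in> H0"
  by (simp add: divide_inverse H0mul H0inv)

lemma mpos: "m > 0" using cardH0 H0one by (metis card_gt_0_iff finite empty_iff)

lemma neg1: "- 1 \<notin> H0"
proof
  assume h: "- 1 \<in> H0"
  have "even (card H0)"
  proof (rule even_card_invol[where f = uminus])
    show "finite H0" by simp
    show "\<forall>x\<in>H0. - x \<in> H0 \<and> - x \<noteq> x \<and> - (- x) = x"
      using H0mul[OF h] neg_ne H0nz by fastforce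
  qed
  then show False using cardH0 oddm by simp
qed

definition K where "K = H0 \<union> uminus ` H0"

lemma Kmem: "x \<in> K \<longleftrightarrow> x \<in> H0 \<or> - x \<in> H0"
  unfolding K_def by (auto simp: image_iff) (metis minus_minus)

lemma cardK: "card K = 2 * m"
proof -
  have "H0 \<inter> uminus ` H0 = {}"
  proof (safe)
    fix x y assume "x \<in> H0" "y \<in> H0" "- y \<in> H0"
    then have "(- y) / y \<in> H0" using H0div by blast
    then show "- y \<in> {}" using H0nz[OF \<open>y \<in> H0\<close>] neg1 by simp
  qed
  moreover have "card (uminus ` H0) = m" using cardH0 by (simp add: card_image)
  ultimately show ?thesis unfolding K_def using cardH0 by (simp add: card_Un_disjoint)
qed

lemma Knz: "x \<in> K \<Longrightarrow> x \<noteq> 0" using Kmem H0nz by force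
lemma Kone: "1 \<in> K" using Kmem H0one by simp
lemma Kneg: "x \<in> K \<Longrightarrow> - x \<in> K" using Kmem by auto
lemma Kmul: "x \<in> K \<Longrightarrow> y \<in> K \<Longrightarrow> x * y \<in> K"
  using Kmem H0mul by (metis minus_mult_minus mult_minus_left mult_minus_right)
lemma Kinv: "x \<in> K \<Longrightarrow> inverse x \<in> K"
  using Kmem H0inv by (metis inverse_minus_eq)
lemma Kdiv: "x \<in> K \<Longrightarrow> y \<in> K \<Longrightarrow> x / y \<in> K"
  by (simp add: divide_inverse Kmul Kinv)

lemma cardNZ: "card (UNIV - {0::'a}) = 6 * m" using cardU by (simp add: card_Diff_singleton)


lemma K_sub: "K \<subseteq> UNIV - {0}" using Knz by auto

lemma closed_bound:
  assumes Ssub: "S \<subseteq> UNIV - {0::'a}" and Sdiv: "\<And>x y. x \<in> S \<Longrightarrow> y \<in> S \<Longrightarrow> x / y \<in> S"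
    and b: "b \<noteq> 0" "b \<notin> S"
  shows "2 * card S \<le> 6 * m"
proof -
  have "S \<inter> (\<lambda>k. b * k) ` S = {}"
  proof safe
    fix x y assume "x \<in> S" "y \<in> S" "b * y \<in> S"
    then have "(b * y) / y \<in> S" using Sdiv by blast
    moreover have "y \<noteq> 0" using \<open>y \<in> S\<close> Ssub by auto
    ultimately show "b * y \<in> {}" using b by simp
  qed
  moreover have "card ((\<lambda>k. b * k) ` S) = card S" using b by (simp add: card_image inj_on_def)
  moreover have "S \<union> (\<lambda>k. b * k) ` S \<subseteq> UNIV - {0}" using Ssub b by auto
  ultimately have "card S + card S \<le> card (UNIV - {0::'a})"
    by (metis card_Un_disjoint card_mono finite finite_Un)
  then show ?thesis using cardNZ by simp
qed

lemma exists_alpha: "\<exists>a. a \<noteq> 0 \<and> a \<notin> K"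
proof (rule ccontr)
  assume "\<not> ?thesis"
  then have "UNIV - {0} \<subseteq> K" by auto
  then have "card (UNIV - {0::'a}) \<le> card K" by (intro card_mono) auto
  then show False using cardNZ cardK mpos by simp
qed

definition alpha where "alpha = (SOME a. a \<noteq> 0 \<and> a \<notin> K)"

lemma alpha: "alpha \<noteq> 0" "alpha \<notin> K"
  using someI_ex[OF exists_alpha] unfolding alpha_def by auto

lemma alpha2: "alpha * alpha \<notin> K"
proof
  assume a2: "alpha * alpha \<in> K"
  define S where "S = K \<union> {x. x / alpha \<in> K}"
  have Sm: "x \<in> S \<longleftrightarrow> x \<in> K \<or> x / alpha \<in> K" for x unfolding S_def by auto
  have Ssub: "S \<subseteq> UNIV - {0}"
  proof
    fix x assume "x \<in> S"
    then have "x \<in> K \<or> x / alpha \<in> K" using Sm by blast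
    then have "x \<noteq> 0" using Knz by (metis div_0)
    then show "x \<in> UNIV - {0}" by simp
  qed
  have Sdiv: "x / y \<in> S" if "x \<in> S" "y \<in> S" for x y
  proof -
    have ynz: "y \<noteq> 0" using Ssub that(2) by blast
    have hx: "x \<in> K \<or> x / alpha \<in> K" using Sm[THEN iffD1, OF that(1)] .
    have hy: "y \<in> K \<or> y / alpha \<in> K" using Sm[THEN iffD1, OF that(2)] .
    consider "x \<in> K" "y \<in> K" | "x \<in> K" "y / alpha \<in> K" | "x / alpha \<in> K" "y \<in> K"
      | "x / alpha \<in> K" "y / alpha \<in> K" using hx hy by blast
    then show ?thesis
    proof cases
      case 1 then show ?thesis using Kdiv[OF 1] Sm by blast
    next
      case 2
      have "x / y / alpha = (x / (y / alpha)) / (alpha * alpha)"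
        using alpha ynz by (simp add: field_simps)
      moreover have "(x / (y / alpha)) / (alpha * alpha) \<in> K" using Kdiv[OF Kdiv[OF 2] a2] .
      ultimately have "x / y / alpha \<in> K" by simp
      then show ?thesis using Sm[THEN iffD2] by blast
    next
      case 3
      have "x / y / alpha = (x / alpha) / y" by simp
      then have "x / y / alpha \<in> K" using Kdiv[OF 3] by (simp add: mult.commute)
      then show ?thesis using Sm[THEN iffD2] by blast
    next
      case 4
      have "x / y = (x / alpha) / (y / alpha)" using alpha by simp
      then have "x / y \<in> K" using Kdiv[OF 4] by metis
      then show ?thesis using Sm[THEN iffD2] by blast
    qed
  qed
  have disj: "K \<inter> {x. x / alpha \<in> K} = {}"
  proof safe
    fix x assume "x \<in> K" "x / alpha \<in> K"
    then have "x / (x / alpha) \<in> K" using Kdiv by blast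
    then show "x \<in> {}" using Knz[OF \<open>x \<in> K\<close>] alpha by simp
  qed
  have "x / alpha \<in> K \<longleftrightarrow> x \<in> (\<lambda>k. alpha * k) ` K" for x
  proof
    assume "x / alpha \<in> K" then show "x \<in> (\<lambda>k. alpha * k) ` K"
      by (rule image_eqI[rotated]) (use alpha in simp)
  next
    assume "x \<in> (\<lambda>k. alpha * k) ` K" then obtain k where "k \<in> K" "x = alpha * k" by blast
    then show "x / alpha \<in> K" using alpha by simp
  qed
  then have "{x. x / alpha \<in> K} = (\<lambda>k. alpha * k) ` K" by blast
  then have "card {x. x / alpha \<in> K} = 2 * m" using alpha cardK by (simp add: card_image inj_on_def)
  then have cS: "card S = 4 * m" unfolding S_def using disj cardK by (simp add: card_Un_disjoint)
  obtain b where b: "b \<noteq> 0" "b \<notin> S"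
  proof -
    have "\<not> UNIV - {0} \<subseteq> S"
    proof
      assume "UNIV - {0} \<subseteq> S"
      then have "card (UNIV - {0::'a}) \<le> card S" by (intro card_mono) auto
      then show False using cS cardNZ mpos by simp
    qed
    then show ?thesis using that by auto
  qed
  have "2 * card S \<le> 6 * m" by (rule closed_bound[OF Ssub Sdiv b]) auto
  then show False using cS mpos by simp
qed


lemma cardC: assumes "c \<noteq> 0" shows "card {x. x / c \<in> K} = 2 * m"
proof -
  have "x / c \<in> K \<longleftrightarrow> x \<in> (\<lambda>k. c * k) ` K" for x
  proof
    assume "x / c \<in> K" then show "x \<in> (\<lambda>k. c * k) ` K"
      by (rule image_eqI[rotated]) (use assms in simp)
  next
    assume "x \<in> (\<lambda>k. c * k) ` K" then obtain k where "k \<in> K" "x = c * k" by blast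
    then show "x / c \<in> K" using assms by simp
  qed
  then have "{x. x / c \<in> K} = (\<lambda>k. c * k) ` K" by blast
  then show ?thesis using assms cardK by (simp add: card_image inj_on_def)
qed

lemma Cnz: "x / c \<in> K \<Longrightarrow> x \<noteq> 0" using Knz by force

lemma disj01: "x \<in> K \<Longrightarrow> x / alpha \<in> K \<Longrightarrow> False"
proof -
  assume a: "x \<in> K" "x / alpha \<in> K"
  then have "x / (x / alpha) \<in> K" using Kdiv by blast
  then show False using Knz[OF a(1)] alpha by simp
qed

lemma disj02: "x \<in> K \<Longrightarrow> x / (alpha * alpha) \<in> K \<Longrightarrow> False"
proof -
  assume a: "x \<in> K" "x / (alpha * alpha) \<in> K"
  then have "x / (x / (alpha * alpha)) \<in> K" using Kdiv by blast
  then show False using Knz[OF a(1)] alpha alpha2 by simp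
qed

lemma disj12: "x / alpha \<in> K \<Longrightarrow> x / (alpha * alpha) \<in> K \<Longrightarrow> False"
proof -
  assume a: "x / alpha \<in> K" "x / (alpha * alpha) \<in> K"
  then have "(x / alpha) / (x / (alpha * alpha)) \<in> K" using Kdiv by blast
  moreover have "x \<noteq> 0" using Cnz a(1) by blast
  ultimately show False using alpha by simp
qed

lemma cover: assumes "x \<noteq> 0" shows "x \<in> K \<or> x / alpha \<in> K \<or> x / (alpha * alpha) \<in> K"
proof -
  let ?C1 = "{x. x / alpha \<in> K}" and ?C2 = "{x. x / (alpha * alpha) \<in> K}"
  have c1: "card ?C1 = 2 * m" using cardC alpha by blast
  have c2: "card ?C2 = 2 * m" using cardC alpha by simp
  have d1: "K \<inter> ?C1 = {}" using disj01 by blast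
  have d2: "(K \<union> ?C1) \<inter> ?C2 = {}" using disj02 disj12 by blast
  have "card (K \<union> ?C1 \<union> ?C2) = 6 * m"
    using c1 c2 cardK d1 d2 by (simp add: card_Un_disjoint)
  moreover have sub: "K \<union> ?C1 \<union> ?C2 \<subseteq> UNIV - {0}" using Knz Cnz by blast
  ultimately have "K \<union> ?C1 \<union> ?C2 = UNIV - {0}"
    using cardNZ by (metis card_subset_eq finite_Diff finite)
  then show ?thesis using assms by blast
qed

lemma alpha3: "alpha * alpha * alpha \<in> K"
proof -
  have "alpha * alpha * alpha \<noteq> 0" using alpha by simp
  moreover have "(alpha * alpha * alpha) / alpha = alpha * alpha" using alpha by simp
  moreover have "(alpha * alpha * alpha) / (alpha * alpha) = alpha" using alpha by simp
  ultimately show ?thesis using cover[of "alpha * alpha * alpha"] alpha alpha2 by metis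
qed

lemma exists_t: "\<exists>t. t / alpha \<in> K \<and> (t - 1) / (alpha * alpha) \<in> K"
proof -
  define T00 where "T00 = {t. t \<in> K \<and> t - 1 \<in> K}"
  define T01 where "T01 = {t. t \<in> K \<and> (t - 1) / alpha \<in> K}"
  define T02 where "T02 = {t. t \<in> K \<and> (t - 1) / (alpha * alpha) \<in> K}"
  define T10 where "T10 = {t. t / alpha \<in> K \<and> t - 1 \<in> K}"
  define T11 where "T11 = {t. t / alpha \<in> K \<and> (t - 1) / alpha \<in> K}"
  define T12 where "T12 = {t. t / alpha \<in> K \<and> (t - 1) / (alpha * alpha) \<in> K}"
  have row0: "K - {1} = T00 \<union> T01 \<union> T02"
  proof
    show "K - {1} \<subseteq> T00 \<union> T01 \<union> T02"
    proof
      fix t assume "t \<in> K - {1}"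
      then have "t \<in> K" "t - 1 \<noteq> 0" by auto
      then show "t \<in> T00 \<union> T01 \<union> T02" using cover[of "t - 1"] unfolding T00_def T01_def T02_def by blast
    qed
    show "T00 \<union> T01 \<union> T02 \<subseteq> K - {1}" unfolding T00_def T01_def T02_def using Cnz Knz by force
  qed
  have "card (K - {1}) = card T00 + card T01 + card T02"
  proof -
    have "T00 \<inter> T01 = {}" unfolding T00_def T01_def using disj01 by blast
    moreover have "(T00 \<union> T01) \<inter> T02 = {}" unfolding T00_def T01_def T02_def using disj02 disj12 by blast
    ultimately show ?thesis unfolding row0 by (simp add: card_Un_disjoint)
  qed
  then have r0: "card T00 + card T01 + card T02 = 2 * m - 1" using cardK Kone by simp
  have row1: "{t. t / alpha \<in> K} = T10 \<union> T11 \<union> T12"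
  proof
    show "{t. t / alpha \<in> K} \<subseteq> T10 \<union> T11 \<union> T12"
    proof
      fix t assume "t \<in> {t. t / alpha \<in> K}"
      then have a: "t / alpha \<in> K" by simp
      have "t \<noteq> 1" using a disj01 Kone by (metis mem_Collect_eq)
      then have "t - 1 \<noteq> 0" by simp
      then show "t \<in> T10 \<union> T11 \<union> T12" using cover[of "t - 1"] a unfolding T10_def T11_def T12_def by blast
    qed
    show "T10 \<union> T11 \<union> T12 \<subseteq> {t. t / alpha \<in> K}" unfolding T10_def T11_def T12_def by blast
  qed
  have r1: "card T10 + card T11 + card T12 = 2 * m"
  proof -
    have "T10 \<inter> T11 = {}" unfolding T10_def T11_def using disj01 by blast
    moreover have "(T10 \<union> T11) \<inter> T12 = {}" unfolding T10_def T11_def T12_def using disj02 disj12 by blast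
    ultimately have "card {t. t / alpha \<in> K} = card T10 + card T11 + card T12"
      unfolding row1 by (simp add: card_Un_disjoint)
    then show ?thesis using cardC alpha by simp
  qed
  have i1: "card T10 \<le> card T01"
  proof (rule card_inj_on_le[where f = "\<lambda>t. 1 - t"])
    show "inj_on (\<lambda>t. 1 - t) T10" by (simp add: inj_on_def)
    show "finite T01" by simp
    show "(\<lambda>t. 1 - t) ` T10 \<subseteq> T01"
    proof
      fix u assume "u \<in> (\<lambda>t. 1 - t) ` T10"
      then obtain t where t: "t / alpha \<in> K" "t - 1 \<in> K" "u = 1 - t" unfolding T10_def by blast
      have "1 - t \<in> K" using Kneg[OF t(2)] by simp
      moreover have "((1 - t) - 1) / alpha \<in> K" using Kneg[OF t(1)] by simp
      ultimately show "u \<in> T01" unfolding T01_def using t(3) by simp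
    qed
  qed
  have i2: "card T11 \<le> card T02"
  proof (rule card_inj_on_le[where f = "\<lambda>t. (t - 1) / t"])
    show "inj_on (\<lambda>t. (t - 1) / t) T11"
    proof (rule inj_onI)
      fix t s assume "t \<in> T11" "s \<in> T11" and e: "(t - 1) / t = (s - 1) / s"
      then have "t \<noteq> 0" "s \<noteq> 0" unfolding T11_def using Cnz by blast+
      then show "t = s" using e by (simp add: field_simps)
    qed
    show "finite T02" by simp
    show "(\<lambda>t. (t - 1) / t) ` T11 \<subseteq> T02"
    proof
      fix u assume "u \<in> (\<lambda>t. (t - 1) / t) ` T11"
      then obtain t where t: "t / alpha \<in> K" "(t - 1) / alpha \<in> K" "u = (t - 1) / t" unfolding T11_def by blast
      have tnz: "t \<noteq> 0" using Cnz t(1) by blast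
      have "(t - 1) / t = ((t - 1) / alpha) / (t / alpha)" using alpha by simp
      then have "u \<in> K" using Kdiv[OF t(2) t(1)] t(3) by metis
      moreover have "(u - 1) / (alpha * alpha) = - inverse ((t / alpha) * (alpha * alpha * alpha))"
        unfolding t(3) using alpha tnz by (simp add: field_simps)
      moreover have "- inverse ((t / alpha) * (alpha * alpha * alpha)) \<in> K"
        using Kneg[OF Kinv[OF Kmul[OF t(1) alpha3]]] .
      ultimately show "u \<in> T02" unfolding T02_def by simp
    qed
  qed
  have "card T12 \<ge> 1" using r0 r1 i1 i2 mpos by linarith
  then have "T12 \<noteq> {}" by auto
  then show ?thesis unfolding T12_def by blast
qed


definition tt where "tt = (SOME t. t / alpha \<in> K \<and> (t - 1) / (alpha * alpha) \<in> K)"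

lemma tt: "tt / alpha \<in> K" "(tt - 1) / (alpha * alpha) \<in> K"
  using someI_ex[OF exists_t] unfolding tt_def by auto

lemma tt_nz: "tt \<noteq> 0" "tt \<noteq> 1"
proof -
  show "tt \<noteq> 0" using Cnz tt(1) by blast
  have "tt - 1 \<noteq> 0" using Cnz tt(2) by blast
  then show "tt \<noteq> 1" by simp
qed

definition BB :: "'a set" where "BB = {0, 1, tt}"

lemma cover6:
  assumes "d \<noteq> 0"
  shows "\<exists>a u v. a \<in> H0 \<and> u \<in> BB \<and> v \<in> BB \<and> d = a * (v - u)"
proof -
  have t1: "tt - 1 \<noteq> 0" using tt_nz by simp
  consider "d \<in> K" | "d / alpha \<in> K" | "d / (alpha * alpha) \<in> K" using cover[OF assms] by blast
  then show ?thesis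
  proof cases
    case 1
    then consider "d \<in> H0" | "- d \<in> H0" using Kmem by blast
    then show ?thesis
    proof cases
      case 1 then show ?thesis by (intro exI[of _ d] exI[of _ 0] exI[of _ 1]) (simp add: BB_def)
    next
      case 2 then show ?thesis by (intro exI[of _ "- d"] exI[of _ 1] exI[of _ 0]) (simp add: BB_def)
    qed
  next
    case 2
    have "d / tt = (d / alpha) / (tt / alpha)" using alpha by simp
    then have "d / tt \<in> K" using Kdiv[OF 2 tt(1)] by metis
    then consider "d / tt \<in> H0" | "- (d / tt) \<in> H0" using Kmem by blast
    then show ?thesis
    proof cases
      case 1 then show ?thesis using tt_nz by (intro exI[of _ "d / tt"] exI[of _ 0] exI[of _ tt]) (simp add: BB_def)
    next
      case 2 then show ?thesis using tt_nz by (intro exI[of _ "- (d / tt)"] exI[of _ tt] exI[of _ 0]) (simp add: BB_def)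
    qed
  next
    case 3
    have "d / (tt - 1) = (d / (alpha * alpha)) / ((tt - 1) / (alpha * alpha))" using alpha by simp
    then have "d / (tt - 1) \<in> K" using Kdiv[OF 3 tt(2)] by metis
    then consider "d / (tt - 1) \<in> H0" | "- (d / (tt - 1)) \<in> H0" using Kmem by blast
    then show ?thesis
    proof cases
      case 1 then show ?thesis using t1 by (intro exI[of _ "d / (tt - 1)"] exI[of _ 1] exI[of _ tt]) (simp add: BB_def)
    next
      case 2
      have "d = - (d / (tt - 1)) * (1 - tt)" using t1 by (simp add: field_simps)
      then show ?thesis using 2 by (intro exI[of _ "- (d / (tt - 1))"] exI[of _ tt] exI[of _ 1]) (simp add: BB_def)
    qed
  qed
qed

definition act :: "'a \<times> 'a \<Rightarrow> 'a \<Rightarrow> 'a" where "act g x = fst g * x + snd g"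
definition blk where "blk g = act g ` BB"
definition Gc where "Gc = H0 \<times> (UNIV :: 'a set)"

lemma act_inj: "g \<in> Gc \<Longrightarrow> act g x = act g y \<longleftrightarrow> x = y"
  unfolding act_def Gc_def using H0nz by auto

lemma exist_pair:
  assumes "x \<noteq> y"
  shows "\<exists>g\<in>Gc. \<exists>u\<in>BB. \<exists>v\<in>BB. act g u = x \<and> act g v = y"
proof -
  obtain a u v where h: "a \<in> H0" "u \<in> BB" "v \<in> BB" "y - x = a * (v - u)"
    using cover6[of "y - x"] assms by auto
  have "act (a, x - a * u) u = x" by (simp add: act_def)
  moreover have "act (a, x - a * u) v = y" using h(4) by (simp add: act_def algebra_simps)
  moreover have "(a, x - a * u) \<in> Gc" using h(1) by (simp add: Gc_def)
  ultimately show ?thesis using h(2,3) by blast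
qed

definition Pairs where "Pairs = {(u, v). u \<in> BB \<and> v \<in> BB \<and> u \<noteq> v}"

lemma card_BB: "card BB = 3" unfolding BB_def using tt_nz by simp

lemma card_Pairs: "card Pairs = 6"
proof -
  have e: "Pairs = BB \<times> BB - (\<lambda>x. (x, x)) ` BB" unfolding Pairs_def by auto
  have "card ((\<lambda>x. (x, x)) ` BB) = 3" using card_BB by (simp add: card_image inj_on_def)
  then show ?thesis unfolding e using card_BB
    by (subst card_Diff_subset) (auto simp: card_cartesian_product)
qed

lemma card_Gc: "card Gc = m * (6 * m + 1)"
  unfolding Gc_def using cardH0 cardU by (simp add: card_cartesian_product)

lemma inj_pairs: "inj_on (\<lambda>(g, u, v). (act g u, act g v)) (Gc \<times> Pairs)"
proof -
  let ?f = "\<lambda>(g, u, v). (act g u, act g v)"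
  let ?Y = "{(x, y). (x::'a) \<noteq> y}"
  have img: "?f ` (Gc \<times> Pairs) = ?Y"
  proof
    show "?f ` (Gc \<times> Pairs) \<subseteq> ?Y" unfolding Pairs_def using act_inj by auto
    show "?Y \<subseteq> ?f ` (Gc \<times> Pairs)"
    proof
      fix p assume "p \<in> ?Y"
      then obtain x y where p: "p = (x, y)" "x \<noteq> y" by auto
      then obtain g u v where "g \<in> Gc" "u \<in> BB" "v \<in> BB" "act g u = x" "act g v = y"
        using exist_pair by blast
      then show "p \<in> ?f ` (Gc \<times> Pairs)" using p unfolding Pairs_def
        by (intro image_eqI[of _ _ "(g, u, v)"]) auto
    qed
  qed
  have cY: "card ?Y = (6 * m + 1) * (6 * m)"
  proof -
    have e: "?Y = UNIV - range (\<lambda>x. (x, x))" by auto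
    have "card (range (\<lambda>x::'a. (x, x))) = 6 * m + 1" using cardU by (simp add: card_image inj_on_def)
    moreover have "card (UNIV :: ('a \<times> 'a) set) = (6 * m + 1) * (6 * m + 1)"
      using cardU by (simp add: card_cartesian_product flip: UNIV_Times_UNIV)
    ultimately show ?thesis unfolding e by (simp add: card_Diff_subset algebra_simps)
  qed
  have "card (Gc \<times> Pairs) = card ?Y" using cY card_Gc card_Pairs by (simp add: card_cartesian_product)
  then show ?thesis using img by (simp add: inj_on_iff_eq_card)
qed

lemma uniq:
  assumes "g \<in> Gc" "g' \<in> Gc" "x \<noteq> y" "x \<in> blk g" "y \<in> blk g" "x \<in> blk g'" "y \<in> blk g'"
  shows "g = g'"
proof -
  obtain u v where uv: "u \<in> BB" "v \<in> BB" "act g u = x" "act g v = y" using assms unfolding blk_def by auto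
  obtain u' v' where uv': "u' \<in> BB" "v' \<in> BB" "act g' u' = x" "act g' v' = y" using assms unfolding blk_def by auto
  have "(g, u, v) \<in> Gc \<times> Pairs" "(g', u', v') \<in> Gc \<times> Pairs" using uv uv' assms unfolding Pairs_def by auto
  then have "(g, u, v) = (g', u', v')" using inj_pairs uv uv' unfolding inj_on_def by fastforce
  then show ?thesis by simp
qed


lemma card_blk: "g \<in> Gc \<Longrightarrow> card (blk g) = 3"
  unfolding blk_def using act_inj card_BB by (simp add: card_image inj_on_def)

lemma card_thru: "card {g \<in> Gc. p \<in> blk g} = 3 * m"
proof -
  let ?f = "\<lambda>(a, u). (a, p - a * u)"
  have "{g \<in> Gc. p \<in> blk g} = ?f ` (H0 \<times> BB)"
  proof
    show "{g \<in> Gc. p \<in> blk g} \<subseteq> ?f ` (H0 \<times> BB)"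
    proof
      fix g assume "g \<in> {g \<in> Gc. p \<in> blk g}"
      then obtain a b u where g: "g = (a, b)" "a \<in> H0" "u \<in> BB" "p = a * u + b"
        unfolding Gc_def blk_def act_def by auto
      then show "g \<in> ?f ` (H0 \<times> BB)" by (intro image_eqI[of _ _ "(a, u)"]) auto
    qed
    show "?f ` (H0 \<times> BB) \<subseteq> {g \<in> Gc. p \<in> blk g}"
      unfolding Gc_def blk_def act_def by (auto simp: image_iff)
  qed
  moreover have "inj_on ?f (H0 \<times> BB)" using H0nz by (auto simp: inj_on_def)
  ultimately show ?thesis using cardH0 card_BB by (simp add: card_image card_cartesian_product)
qed

lemma inter_le1:
  assumes "g \<in> Gc" "h \<in> Gc" "g \<noteq> h" shows "card (blk g \<inter> blk h) \<le> 1"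
proof -
  have "\<forall>x\<in>blk g \<inter> blk h. \<forall>y\<in>blk g \<inter> blk h. x = y" using uniq assms by blast
  then show ?thesis by (simp add: card_le_Suc0_iff_eq)
qed

lemma count_k:
  assumes h: "h \<in> Gc"
  shows "card {y \<in> Gc. y \<noteq> h \<and> blk y \<inter> blk h \<noteq> {}} = 3 * (3 * m - 1)"
proof -
  have e: "{y \<in> Gc. y \<noteq> h \<and> blk y \<inter> blk h \<noteq> {}} = (\<Union>x\<in>blk h. {y \<in> Gc. x \<in> blk y} - {h})"
    by auto
  have c: "card ({y \<in> Gc. x \<in> blk y} - {h}) = 3 * m - 1" if "x \<in> blk h" for x
    using card_thru[of x] that h by (simp add: card_Diff_singleton)
  have "card (\<Union>x\<in>blk h. {y \<in> Gc. x \<in> blk y} - {h}) = (\<Sum>x\<in>blk h. card ({y \<in> Gc. x \<in> blk y} - {h}))"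
  proof (rule card_UN_disjoint)
    show "finite (blk h)" by simp
    show "\<forall>i\<in>blk h. finite ({y \<in> Gc. i \<in> blk y} - {h})" by simp
    show "\<forall>i\<in>blk h. \<forall>j\<in>blk h. i \<noteq> j \<longrightarrow> ({y \<in> Gc. i \<in> blk y} - {h}) \<inter> ({y \<in> Gc. j \<in> blk y} - {h}) = {}"
      using uniq h by blast
  qed
  also have "\<dots> = 3 * (3 * m - 1)" using c card_blk[OF h] by simp
  finally show ?thesis using e by simp
qed

lemma count_pair:
  assumes h1: "h1 \<in> Gc" and h2: "h2 \<in> Gc" and x: "x1 \<in> blk h1" "x2 \<in> blk h2" and ne: "h1 \<noteq> h2"
  shows "card {y \<in> Gc. y \<noteq> h1 \<and> y \<noteq> h2 \<and> x1 \<in> blk y \<and> x2 \<in> blk y}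
    = (if x1 = x2 then 3 * m - 2 else if x2 \<in> blk h1 \<or> x1 \<in> blk h2 then 0 else 1)"
proof (cases "x1 = x2")
  case True
  have e: "{y \<in> Gc. y \<noteq> h1 \<and> y \<noteq> h2 \<and> x1 \<in> blk y \<and> x2 \<in> blk y} = {y \<in> Gc. x1 \<in> blk y} - {h1, h2}"
    using True by auto
  have "card ({y \<in> Gc. x1 \<in> blk y} - {h1, h2}) = 3 * m - 2"
    using card_thru[of x1] h1 h2 x True ne by (subst card_Diff_subset) auto
  then show ?thesis using e True by simp
next
  case False
  obtain y0 u v where y0: "y0 \<in> Gc" "u \<in> BB" "v \<in> BB" "act y0 u = x1" "act y0 v = x2"
    using exist_pair[OF False] by blast
  have y0b: "x1 \<in> blk y0" "x2 \<in> blk y0" using y0 unfolding blk_def by auto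
  have e: "{y \<in> Gc. y \<noteq> h1 \<and> y \<noteq> h2 \<and> x1 \<in> blk y \<and> x2 \<in> blk y} = {y0} - {h1, h2}"
    using uniq[OF _ y0(1) False _ _ y0b] y0 y0b by blast
  have a1: "y0 = h1 \<longleftrightarrow> x2 \<in> blk h1" using uniq[OF h1 y0(1) False x(1) _ y0b] y0b by blast
  have a2: "y0 = h2 \<longleftrightarrow> x1 \<in> blk h2" using uniq[OF h2 y0(1) False _ x(2) y0b] y0b by blast
  show ?thesis unfolding e using False a1 a2 by auto
qed


lemma count_lm:
  assumes h1: "h1 \<in> Gc" and h2: "h2 \<in> Gc" and ne: "h1 \<noteq> h2"
  shows "card {y \<in> Gc. (y \<noteq> h1 \<and> blk y \<inter> blk h1 \<noteq> {}) \<and> (y \<noteq> h2 \<and> blk y \<inter> blk h2 \<noteq> {})}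
    = (if blk h1 \<inter> blk h2 \<noteq> {} then 3 * m + 2 else 9)"
proof -
  define B1 where "B1 = blk h1"
  define B2 where "B2 = blk h2"
  define S where "S p = {y \<in> Gc. y \<noteq> h1 \<and> y \<noteq> h2 \<and> fst p \<in> blk y \<and> snd p \<in> blk y}" for p
  define f where "f p = (if fst p = snd p then 3 * m - 2 else 0) + (if fst p \<notin> B2 \<and> snd p \<notin> B1 then 1 else 0)" for p
  have e: "{y \<in> Gc. (y \<noteq> h1 \<and> blk y \<inter> blk h1 \<noteq> {}) \<and> (y \<noteq> h2 \<and> blk y \<inter> blk h2 \<noteq> {})}
      = (\<Union>p\<in>B1 \<times> B2. S p)"
    unfolding S_def B1_def B2_def by auto
  have "card (\<Union>p\<in>B1 \<times> B2. S p) = (\<Sum>p\<in>B1 \<times> B2. card (S p))"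
  proof (rule card_UN_disjoint)
    show "finite (B1 \<times> B2)" by simp
    show "\<forall>i\<in>B1 \<times> B2. finite (S i)" by simp
    show "\<forall>i\<in>B1 \<times> B2. \<forall>j\<in>B1 \<times> B2. i \<noteq> j \<longrightarrow> S i \<inter> S j = {}"
    proof (intro ballI impI)
      fix i j assume ij: "i \<in> B1 \<times> B2" "j \<in> B1 \<times> B2" "i \<noteq> j"
      show "S i \<inter> S j = {}"
      proof (rule ccontr)
        assume "S i \<inter> S j \<noteq> {}"
        then obtain y where y: "y \<in> S i" "y \<in> S j" by blast
        obtain a1 a2 b1 b2 where ab: "i = (a1, a2)" "j = (b1, b2)" by (cases i, cases j) auto
        have yy: "y \<in> Gc" "y \<noteq> h1" "y \<noteq> h2" "a1 \<in> blk y" "a2 \<in> blk y" "b1 \<in> blk y" "b2 \<in> blk y"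
          using y unfolding S_def ab by auto
        have bb: "a1 \<in> blk h1" "b1 \<in> blk h1" "a2 \<in> blk h2" "b2 \<in> blk h2"
          using ij unfolding ab B1_def B2_def by auto
        show False
        proof (cases "a1 = b1")
          case True
          then have "a2 \<noteq> b2" using ij(3) ab by simp
          then show False using uniq[OF yy(1) h2 _ yy(5) yy(7) bb(3) bb(4)] yy(3) by blast
        next
          case False
          then show False using uniq[OF yy(1) h1 _ yy(4) yy(6) bb(1) bb(2)] yy(2) by blast
        qed
      qed
    qed
  qed
  also have "\<dots> = (\<Sum>p\<in>B1 \<times> B2. f p)"
  proof (rule sum.cong[OF refl])
    fix p assume p: "p \<in> B1 \<times> B2"
    obtain x1 x2 where px: "p = (x1, x2)" by (cases p)
    have x: "x1 \<in> blk h1" "x2 \<in> blk h2" using p px B1_def B2_def by auto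
    have "card (S p) = (if x1 = x2 then 3 * m - 2 else if x2 \<in> blk h1 \<or> x1 \<in> blk h2 then 0 else 1)"
      unfolding S_def px fst_conv snd_conv by (rule count_pair[OF h1 h2 x ne])
    then show "card (S p) = f p" unfolding f_def px using x B1_def B2_def by auto
  qed
  also have "\<dots> = (3 * m - 2) * card {p \<in> B1 \<times> B2. fst p = snd p} + card {p \<in> B1 \<times> B2. fst p \<notin> B2 \<and> snd p \<notin> B1}"
    unfolding f_def by (simp add: sum.distrib sum.inter_filter[symmetric])
  also have "card {p \<in> B1 \<times> B2. fst p = snd p} = card (B1 \<inter> B2)"
  proof -
    have "{p \<in> B1 \<times> B2. fst p = snd p} = (\<lambda>x. (x, x)) ` (B1 \<inter> B2)" by auto
    then show ?thesis by (simp add: card_image inj_on_def)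
  qed
  also have "{p \<in> B1 \<times> B2. fst p \<notin> B2 \<and> snd p \<notin> B1} = (B1 - B2) \<times> (B2 - B1)" by auto
  finally have main: "card {y \<in> Gc. (y \<noteq> h1 \<and> blk y \<inter> blk h1 \<noteq> {}) \<and> (y \<noteq> h2 \<and> blk y \<inter> blk h2 \<noteq> {})}
      = (3 * m - 2) * card (B1 \<inter> B2) + card (B1 - B2) * card (B2 - B1)"
    using e by (simp add: card_cartesian_product)
  have c1: "card B1 = 3" "card B2 = 3" unfolding B1_def B2_def using card_blk h1 h2 by auto
  have le1: "card (B1 \<inter> B2) \<le> 1" unfolding B1_def B2_def using inter_le1[OF h1 h2 ne] .
  show ?thesis
  proof (cases "B1 \<inter> B2 = {}")
    case True
    then have "B1 - B2 = B1" "B2 - B1 = B2" by auto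
    then show ?thesis using main True c1 unfolding B1_def B2_def by simp
  next
    case False
    then have "card (B1 \<inter> B2) > 0" by (simp add: card_gt_0_iff)
    then have ci: "card (B1 \<inter> B2) = 1" using le1 by linarith
    have "card (B1 - B2) = 2" using card_Diff_subset_Int[of B1 B2] c1 ci by simp
    moreover have "card (B2 - B1) = 2" using card_Diff_subset_Int[of B2 B1] c1 ci by (simp add: Int_commute)
    ultimately show ?thesis using main ci False mpos unfolding B1_def B2_def by simp
  qed
qed


abbreviation GG where "GG \<equiv> affine_group H0"

lemma GG_carrier: "carrier GG = Gc" by (simp add: affine_group_def Gc_def)
lemma GG_one: "\<one>\<^bsub>GG\<^esub> = (1, 0)" by (simp add: affine_group_def)
lemma GG_mult: "(a, b) \<otimes>\<^bsub>GG\<^esub> (c, e) = (a * c, a * e + b)" by (simp add: affine_group_def)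

lemma GG_group: "group GG"
proof (rule groupI)
  fix x y assume "x \<in> carrier GG" "y \<in> carrier GG"
  then show "x \<otimes>\<^bsub>GG\<^esub> y \<in> carrier GG"
    by (cases x, cases y) (simp add: GG_carrier GG_mult Gc_def H0mul)
next
  show "\<one>\<^bsub>GG\<^esub> \<in> carrier GG" by (simp add: GG_carrier GG_one Gc_def H0one)
next
  fix x y z assume "x \<in> carrier GG" "y \<in> carrier GG" "z \<in> carrier GG"
  then show "x \<otimes>\<^bsub>GG\<^esub> y \<otimes>\<^bsub>GG\<^esub> z = x \<otimes>\<^bsub>GG\<^esub> (y \<otimes>\<^bsub>GG\<^esub> z)"
    by (cases x, cases y, cases z) (simp add: GG_mult algebra_simps)
next
  fix x assume "x \<in> carrier GG"
  then show "\<one>\<^bsub>GG\<^esub> \<otimes>\<^bsub>GG\<^esub> x = x" by (cases x) (simp add: GG_one GG_mult)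
next
  fix x assume x: "x \<in> carrier GG"
  then obtain a b where ab: "x = (a, b)" "a \<in> H0" by (cases x) (auto simp: GG_carrier Gc_def)
  have "(inverse a, - (b / a)) \<in> carrier GG" using H0inv[OF ab(2)] by (simp add: GG_carrier Gc_def)
  moreover have "(inverse a, - (b / a)) \<otimes>\<^bsub>GG\<^esub> x = \<one>\<^bsub>GG\<^esub>"
    using H0nz[OF ab(2)] by (simp add: ab GG_mult GG_one field_simps)
  ultimately show "\<exists>y\<in>carrier GG. y \<otimes>\<^bsub>GG\<^esub> x = \<one>\<^bsub>GG\<^esub>" by blast
qed

lemma blk_mult: assumes "g \<in> Gc" "h \<in> Gc" shows "blk (g \<otimes>\<^bsub>GG\<^esub> h) = act g ` blk h"
proof -
  obtain a b c e where "g = (a, b)" "h = (c, e)" by (cases g, cases h)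
  then show ?thesis unfolding blk_def image_image by (simp add: GG_mult act_def algebra_simps)
qed

definition Adj where "Adj y z \<longleftrightarrow> y \<noteq> z \<and> blk y \<inter> blk z \<noteq> {}"

lemma Adj_sym: "Adj y z \<longleftrightarrow> Adj z y" unfolding Adj_def by blast

lemma Adj_inv:
  assumes g: "g \<in> Gc" and y: "y \<in> Gc" and z: "z \<in> Gc"
  shows "Adj (g \<otimes>\<^bsub>GG\<^esub> y) (g \<otimes>\<^bsub>GG\<^esub> z) \<longleftrightarrow> Adj y z"
proof -
  interpret group GG by (rule GG_group)
  have "g \<otimes>\<^bsub>GG\<^esub> y = g \<otimes>\<^bsub>GG\<^esub> z \<longleftrightarrow> y = z" using g y z GG_carrier by simp
  moreover have "act g ` blk y \<inter> act g ` blk z = act g ` (blk y \<inter> blk z)"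
    using act_inj[OF g] by (auto simp: image_iff) 
  ultimately show ?thesis unfolding Adj_def using blk_mult g y z by auto
qed


lemma pds_main: "is_regular_PDS GG {y \<in> Gc. Adj y (1, 0)} (m * (6 * m + 1)) (3 * (3 * m - 1)) (3 * m + 2) 9"
proof -
  interpret G: group GG by (rule GG_group)
  define D where "D = {y \<in> Gc. Adj y (1, 0)}"
  have one: "(1, 0) \<in> Gc" using H0one by (simp add: Gc_def)
  have oneG: "\<one>\<^bsub>GG\<^esub> = (1, 0)" by (rule GG_one)
  have car: "carrier GG = Gc" by (rule GG_carrier)
  have Dsub: "D \<subseteq> Gc" unfolding D_def by auto
  have cardD: "card D = 3 * (3 * m - 1)"
    using count_k[OF one] unfolding D_def Adj_def by simp
  have invD: "inv\<^bsub>GG\<^esub> y \<in> D" if "y \<in> D" for y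
  proof -
    have y: "y \<in> Gc" "Adj y (1, 0)" using that unfolding D_def by auto
    have iy: "inv\<^bsub>GG\<^esub> y \<in> Gc" using y car by auto
    have "Adj (inv\<^bsub>GG\<^esub> y \<otimes>\<^bsub>GG\<^esub> y) (inv\<^bsub>GG\<^esub> y \<otimes>\<^bsub>GG\<^esub> (1, 0))"
      using Adj_inv[OF iy y(1) one] y(2) by simp
    then have "Adj (1, 0) (inv\<^bsub>GG\<^esub> y)" using y(1) iy car oneG by (metis G.l_inv G.r_one)
    then show ?thesis using iy Adj_sym unfolding D_def by auto
  qed
  have invimg: "(\<lambda>x. inv\<^bsub>GG\<^esub> x) ` D = D"
  proof
    show "(\<lambda>x. inv\<^bsub>GG\<^esub> x) ` D \<subseteq> D" using invD by auto
    show "D \<subseteq> (\<lambda>x. inv\<^bsub>GG\<^esub> x) ` D"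
    proof
      fix y assume "y \<in> D"
      then have "y = inv\<^bsub>GG\<^esub> (inv\<^bsub>GG\<^esub> y)" "inv\<^bsub>GG\<^esub> y \<in> D" using invD Dsub car by auto
      then show "y \<in> (\<lambda>x. inv\<^bsub>GG\<^esub> x) ` D" by blast
    qed
  qed
  have oneD: "\<one>\<^bsub>GG\<^esub> \<notin> D" unfolding D_def Adj_def oneG by simp
  have dc: "diff_count GG D g = (if g \<in> D then 3 * m + 2 else 9)"
    if g: "g \<in> carrier GG" "g \<noteq> \<one>\<^bsub>GG\<^esub>" for g
  proof -
    have gG: "g \<in> Gc" using g car by simp
    have ig: "inv\<^bsub>GG\<^esub> g \<in> Gc" using gG car by auto
    have ig1: "(1, 0) \<noteq> inv\<^bsub>GG\<^esub> g"
    proof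
      assume "(1, 0) = inv\<^bsub>GG\<^esub> g"
      then have "inv\<^bsub>GG\<^esub> g = \<one>\<^bsub>GG\<^esub>" using oneG by simp
      then have "g = \<one>\<^bsub>GG\<^esub>" using g(1) by (metis G.inv_inv G.inv_one)
      then show False using g(2) by simp
    qed
    have e1: "{(x, y). x \<in> D \<and> y \<in> D \<and> x \<otimes>\<^bsub>GG\<^esub> inv\<^bsub>GG\<^esub> y = g} = (\<lambda>y. (g \<otimes>\<^bsub>GG\<^esub> y, y)) ` {y \<in> D. g \<otimes>\<^bsub>GG\<^esub> y \<in> D}"
    proof -
      have "x \<otimes>\<^bsub>GG\<^esub> inv\<^bsub>GG\<^esub> y = g \<longleftrightarrow> x = g \<otimes>\<^bsub>GG\<^esub> y" if "x \<in> D" "y \<in> D" for x y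
        using G.inv_solve_right'[of g x y] that Dsub car g by auto
      note eq = this
      have "p \<in> {(x, y). x \<in> D \<and> y \<in> D \<and> x \<otimes>\<^bsub>GG\<^esub> inv\<^bsub>GG\<^esub> y = g} \<longleftrightarrow> p \<in> (\<lambda>y. (g \<otimes>\<^bsub>GG\<^esub> y, y)) ` {y \<in> D. g \<otimes>\<^bsub>GG\<^esub> y \<in> D}" for p
      proof -
        obtain x y where Pair: "p = (x, y)" by (cases p)
        show ?thesis
        proof
          assume "p \<in> {(x, y). x \<in> D \<and> y \<in> D \<and> x \<otimes>\<^bsub>GG\<^esub> inv\<^bsub>GG\<^esub> y = g}"
          then have xy: "x \<in> D" "y \<in> D" "x \<otimes>\<^bsub>GG\<^esub> inv\<^bsub>GG\<^esub> y = g" using Pair by auto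
          then have "x = g \<otimes>\<^bsub>GG\<^esub> y" using eq by blast
          then show "p \<in> (\<lambda>y. (g \<otimes>\<^bsub>GG\<^esub> y, y)) ` {y \<in> D. g \<otimes>\<^bsub>GG\<^esub> y \<in> D}"
            using Pair xy by (intro image_eqI[of _ _ y]) auto
        next
          assume "p \<in> (\<lambda>y. (g \<otimes>\<^bsub>GG\<^esub> y, y)) ` {y \<in> D. g \<otimes>\<^bsub>GG\<^esub> y \<in> D}"
          then obtain z where z: "z \<in> D" "g \<otimes>\<^bsub>GG\<^esub> z \<in> D" "p = (g \<otimes>\<^bsub>GG\<^esub> z, z)" by auto
          then have "(g \<otimes>\<^bsub>GG\<^esub> z) \<otimes>\<^bsub>GG\<^esub> inv\<^bsub>GG\<^esub> z = g" using eq by blast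
          then show "p \<in> {(x, y). x \<in> D \<and> y \<in> D \<and> x \<otimes>\<^bsub>GG\<^esub> inv\<^bsub>GG\<^esub> y = g}" using z by auto
        qed
      qed
      then show ?thesis by blast
    qed
    have "card {(x, y). x \<in> D \<and> y \<in> D \<and> x \<otimes>\<^bsub>GG\<^esub> inv\<^bsub>GG\<^esub> y = g} = card {y \<in> D. g \<otimes>\<^bsub>GG\<^esub> y \<in> D}"
      unfolding e1 by (rule card_image) (auto simp: inj_on_def)
    also have "{y \<in> D. g \<otimes>\<^bsub>GG\<^esub> y \<in> D} = {y \<in> Gc. Adj y (1, 0) \<and> Adj y (inv\<^bsub>GG\<^esub> g)}"
    proof -
      have "Adj (g \<otimes>\<^bsub>GG\<^esub> y) (1, 0) \<longleftrightarrow> Adj y (inv\<^bsub>GG\<^esub> g)" if "y \<in> Gc" for y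
      proof -
        have "(1, 0) = g \<otimes>\<^bsub>GG\<^esub> inv\<^bsub>GG\<^esub> g" using gG car oneG by simp
        then show ?thesis using Adj_inv[OF gG that ig] by simp
      qed
      moreover have "g \<otimes>\<^bsub>GG\<^esub> y \<in> Gc" if "y \<in> Gc" for y using that gG car by auto
      ultimately show ?thesis unfolding D_def by auto
    qed
    also have "card {y \<in> Gc. Adj y (1, 0) \<and> Adj y (inv\<^bsub>GG\<^esub> g)} = (if blk (1, 0) \<inter> blk (inv\<^bsub>GG\<^esub> g) \<noteq> {} then 3 * m + 2 else 9)"
      using count_lm[OF one ig ig1] unfolding Adj_def by simp
    also have "(blk (1, 0) \<inter> blk (inv\<^bsub>GG\<^esub> g) \<noteq> {}) \<longleftrightarrow> g \<in> D"
    proof -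
      have "(1, 0) = g \<otimes>\<^bsub>GG\<^esub> inv\<^bsub>GG\<^esub> g" using gG car oneG by simp
      moreover have "g = g \<otimes>\<^bsub>GG\<^esub> (1, 0)" using gG car oneG by (metis G.r_one)
      ultimately have "Adj g (1, 0) \<longleftrightarrow> Adj (1, 0) (inv\<^bsub>GG\<^esub> g)" using Adj_inv[OF gG one ig] by metis
      then show ?thesis unfolding D_def Adj_def using gG ig1 by auto
    qed
    finally show ?thesis unfolding diff_count_def .
  qed
  have "is_PDS GG D (m * (6 * m + 1)) (3 * (3 * m - 1)) (3 * m + 2) 9"
    unfolding is_PDS_def using car card_Gc Dsub cardD dc by (auto simp: Gc_def)
  then show ?thesis unfolding is_regular_PDS_def D_def[symmetric] using invimg oneD by simp
qed

end

theorem mainTheorem20: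
  fixes p d q :: nat and H0 :: "'a::{field, finite} set"
  assumes "prime p" and "d \<ge> 1" and "q = p ^ d"
    and "card (UNIV :: 'a set) = q"
    and "q > 9" and "q mod 12 = 7"
    and "H0 \<subseteq> UNIV - {0}" and "1 \<in> H0"
    and "\<forall>x \<in> H0. \<forall>y \<in> H0. x * y \<in> H0"
    and "card H0 = (q - 1) div 6"
  shows "\<exists>D. is_regular_PDS (affine_group H0) D
            (q * (q - 1) div 6) (3 * (q - 3) div 2) ((q + 3) div 2) 9"
proof -
  define m where "m = card H0"
  define j where "j = q div 12"
  have j: "q = 12 * j + 7" using div_mult_mod_eq[of q 12] assms(6) unfolding j_def by simp
  have mj: "m = 2 * j + 1" using assms(10) j unfolding m_def by simp
  have qm: "q = 6 * m + 1" using j mj by simp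
  interpret pds_ctx H0 m
  proof
    show "0 \<notin> H0" using assms(7) by auto
    show "1 \<in> H0" by (rule assms(8))
    show "\<And>x y. x \<in> H0 \<Longrightarrow> y \<in> H0 \<Longrightarrow> x * y \<in> H0" using assms(9) by blast
    show "card H0 = m" by (simp add: m_def)
    show "card (UNIV :: 'a set) = 6 * m + 1" using assms(4) qm by simp
    show "odd m" using mj by simp
  qed
  have ex: "\<exists>D. is_regular_PDS (affine_group H0) D (m * (6 * m + 1)) (3 * (3 * m - 1)) (3 * m + 2) 9"
    using pds_main by blast
  have n1: "q * (q - 1) div 6 = m * (6 * m + 1)"
  proof -
    have "q * (q - 1) = 6 * (m * (6 * m + 1))" using qm by (simp add: algebra_simps)
    then show ?thesis by simp
  qed
  have n2: "3 * (q - 3) div 2 = 3 * (3 * m - 1)"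
  proof -
    have "3 * (q - 3) = 2 * (3 * (3 * m - 1))" using qm mj by simp
    then show ?thesis by simp
  qed
  have n3: "(q + 3) div 2 = 3 * m + 2"
  proof -
    have "q + 3 = 2 * (3 * m + 2)" using qm by simp
    then show ?thesis by simp
  qed
  show ?thesis using ex n1 n2 n3 by simp
qed

end
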